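(* Let $n$ and $e$ be positive integers, let $s \in \{1,2,3\}$, and let $S = \{m_1,\dots,m_e\}$ be a set of integers which is a Sidon-type set of strength $s$ in $\mathbb{Z}_n$. Let $A = A(S)$ be the $2e \times n$ matrix whose rows are, in order, $s(m_1), c(m_1), s(m_2), c(m_2), \dots, s(m_e), c(m_e)$. If $f:\mathbb{R}^{2e}\to\mathbb{R}$ is a polynomial with $f \in \Phi_s$ (with respect to the variables $x_0,\dots,x_{2e-1}$), then $f(A) = 0$.
   Context: For an integer $m$, $s(m), c(m) \in \mathbb{R}^n$ are the vectors $s(m) = \big(\sin(\tfrac{2\pi}{n} km)\big)_{k=1}^n$ and $c(m) = \big(\cos(\tfrac{2\pi}{n} km)\big)_{k=1}^n$. For a matrix $U$ with columns $u_1,\dots,u_n \in \mathbb{R}^{D+1}$ and a polynomial $f(x_0,\dots,x_D)$, $f(U) = \sum_{k=1}^n f(u_k)$. In variables $x_0,\dots,x_D$: $\Phi_1 = \{x_i : 0\le i\le D\}$; $\Phi_2 = \{x_ix_j : 0\le i<j\le D\} \cup \{x_i^2 - x_{i+1}^2 : 0 \le i \le D-1\}$; $\Phi_3 = \{x_ix_jx_k : 0\le i<j<k\le D\}\cup\{x_i^3 - 3x_ix_j^2 : 0\le i\ne j\le D\}$. A set $S$ of integers is a Sidon-type set of strength $t$ in $\mathbb{Z}_n$ if no non-trivial sum $\varepsilon_1x_1+\cdots+\varepsilon_tx_t$ with $\varepsilon_i\in\{0,\pm1\}$ and $x_i\in S$ (not necessarily distinct) is congruent to $0 \bmod n$; a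 sum is non-trivial if some $\varepsilon_i \ne 0$ and no element of $S$ appears with both coefficient $+1$ and coefficient $-1$. *)

theory Defs
  imports Complex_Main "HOL-Number_Theory.Cong"
begin

definition sidon_type :: "int set \<Rightarrow> nat \<Rightarrow> nat \<Rightarrow> bool" where
  "sidon_type S t n \<longleftrightarrow>
     (\<forall>(\<epsilon>::nat \<Rightarrow> int) (x::nat \<Rightarrow> int).
        (\<forall>i<t. \<epsilon> i \<in> {-1, 0, 1} \<and> x i \<in> S) \<and>
        (\<exists>i<t. \<epsilon> i \<noteq> 0) \<and>
        \<not> (\<exists>i<t. \<exists>j<t. \<epsilon> i = 1 \<and> \<epsilon> j = -1 \<and> x i = x j)
        \<longrightarrow> \<not> [(\<Sum>i<t. \<epsilon> i * x i) = 0] (mod int n))"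

text \<open>Polynomials in variables x_0..x_D, represented by their evaluation maps
  on points x :: nat => real (only coordinates 0..D are used).\<close>
definition Phi1 :: "nat \<Rightarrow> ((nat \<Rightarrow> real) \<Rightarrow> real) set" where
  "Phi1 D = {(\<lambda>x. x i) | i. i \<le> D}"

definition Phi2 :: "nat \<Rightarrow> ((nat \<Rightarrow> real) \<Rightarrow> real) set" where
  "Phi2 D = {(\<lambda>x. x i * x j) | i j. i < j \<and> j \<le> D}
          \<union> {(\<lambda>x. x i ^ 2 - x (i + 1) ^ 2) | i. i + 1 \<le> D}"

definition Phi3 :: "nat \<Rightarrow> ((nat \<Rightarrow> real) \<Rightarrow> real) set" where
  "Phi3 D = {(\<lambda>x. x i * x j * x k) | i j k. i < j \<and> j < k \<and> k \<le> D}
          \<union> {(\<lambda>x. x i ^ 3 - 3 * x i * x j ^ 2) | i j. i \<le> D \<and> j \<le> D \<and> i \<noteq> j}"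

definition Phi :: "nat \<Rightarrow> nat \<Rightarrow> ((nat \<Rightarrow> real) \<Rightarrow> real) set" where
  "Phi s D = (if s = 1 then Phi1 D else if s = 2 then Phi2 D else if s = 3 then Phi3 D else {})"

text \<open>Entry (r, k) (row r in 0..2e-1, column k in 1..n) of A(S): row 2j is s(m_j),
  row 2j+1 is c(m_j) (0-indexed m).\<close>
definition Amat :: "nat \<Rightarrow> nat \<Rightarrow> (nat \<Rightarrow> int) \<Rightarrow> nat \<Rightarrow> nat \<Rightarrow> real" where
  "Amat e n m r k =
     (if r < 2 * e then
        (if even r then sin (2 * pi / real n * real k * real_of_int (m (r div 2)))
         else cos (2 * pi / real n * real k * real_of_int (m (r div 2))))
      else 0)"

text \<open>f(U) = sum over the columns of U.\<close>
definition eval_cols :: "((nat \<Rightarrow> real) \<Rightarrow> real) \<Rightarrow> (nat \<Rightarrow> nat \<Rightarrow> real) \<Rightarrow> nat \<Rightarrow> real" where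
  "eval_cols f U n = (\<Sum>k = 1..n. f (\<lambda>r. U r k))"

end

theory Submission
  imports Defs
begin

lemma sc2: "2 * sin (a::real) * cos b = sin (b + a) - sin (b - a)"
  by (simp add: sin_add sin_diff)

lemma tele: "2 * sin (x/2) * (\<Sum>k=1..N. cos (real k * x - \<phi>)) = sin ((real N + 1/2) * x - \<phi>) - sin (x/2 - \<phi>)"
proof (induction N)
  case 0 then show ?case by simp
next
  case (Suc N)
  have e: "2 * sin (x/2) * cos (real (Suc N) * x - \<phi>) = sin ((real N + 3/2) * x - \<phi>) - sin ((real N + 1/2) * x - \<phi>)"
  proof -
    have a: "real (Suc N) * x - \<phi> + x/2 = (real N + 3/2) * x - \<phi>" by (simp add: algebra_simps)
    have b: "real (Suc N) * x - \<phi> - x/2 = (real N + 1/2) * x - \<phi>" by (simp add: algebra_simps)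
    show ?thesis using sc2[of "x/2" "real (Suc N) * x - \<phi>"] unfolding a b .
  qed
  have f: "(real (Suc N) + 1/2) = real N + 3/2" by simp
  show ?case using Suc e unfolding f by (simp add: algebra_simps)
qed

lemma sumcos:
  assumes "n > 0"
  shows "(\<Sum>k=1..n. cos (2 * pi / real n * real k * real_of_int c - \<phi>)) = (if int n dvd c then real n * cos \<phi> else 0)"
proof (cases "int n dvd c")
  case True
  then obtain d where d: "c = int n * d" by auto
  have "cos (2 * pi / real n * real k * real_of_int c - \<phi>) = cos \<phi>" for k
  proof -
    have "2 * pi / real n * real k * real_of_int c = 2 * pi * of_int (int k * d)"
      using assms by (simp add: d)
    then show ?thesis by (simp only: cos_diff cos_int_2pin sin_int_2pin)
  qed
  then show ?thesis using True by simp
next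
  case False
  define x where "x = 2 * pi * real_of_int c / real n"
  have eq: "2 * pi / real n * real k * real_of_int c - \<phi> = real k * x - \<phi>" for k
    by (simp add: x_def)
  have s0: "sin (x/2) \<noteq> 0"
  proof
    assume "sin (x/2) = 0"
    then obtain i :: int where "x/2 = of_int i * pi" by (auto simp: sin_zero_iff_int2)
    then have "real_of_int c = real n * of_int i" using assms by (simp add: x_def field_simps)
    then have "c = int n * i" by (metis of_int_eq_iff of_int_mult of_int_of_nat_eq)
    then show False using False by simp
  qed
  have "(real n + 1/2) * x - \<phi> = (x/2 - \<phi>) + 2 * pi * of_int c"
    using assms by (simp add: x_def field_simps)
  then have "sin ((real n + 1/2) * x - \<phi>) = sin ((x/2 - \<phi>) + 2 * pi * of_int c)"
    by (simp add: algebra_simps)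
  also have "\<dots> = sin (x/2 - \<phi>)"
    by (simp only: sin_add sin_int_2pin cos_int_2pin)
  finally have "sin ((real n + 1/2) * x - \<phi>) = sin (x/2 - \<phi>)" .
  then have "2 * sin (x/2) * (\<Sum>k=1..n. cos (real k * x - \<phi>)) = 0" using tele by simp
  then have "(\<Sum>k=1..n. cos (real k * x - \<phi>)) = 0" using s0 by simp
  then show ?thesis using False by (simp only: eq) simp
qed

definition lin :: "(real \<times> int \<times> real) list \<Rightarrow> real \<Rightarrow> real" where
  "lin L t = sum_list (map (\<lambda>(w, c, \<phi>). w * cos (t * of_int c - \<phi>)) L)"

lemma lin_simps [simp]: "lin [] t = 0" "lin ((w, c, \<phi>) # L) t = w * cos (t * of_int c - \<phi>) + lin L t"
  by (simp_all add: lin_def)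

lemma comb:
  assumes "n > 0" "\<forall>(w, c, \<phi>)\<in>set L. \<not> int n dvd c \<or> cos \<phi> = 0"
  shows "(\<Sum>k=1..n. lin L (2 * pi / real n * real k)) = 0"
  using assms(2)
proof (induction L)
  case Nil then show ?case by simp
next
  case (Cons x L)
  obtain w c \<phi> where x: "x = (w, c, \<phi>)" by (cases x) auto
  have "(\<Sum>k=1..n. lin (x # L) (2 * pi / real n * real k))
      = w * (\<Sum>k=1..n. cos (2 * pi / real n * real k * of_int c - \<phi>)) + (\<Sum>k=1..n. lin L (2 * pi / real n * real k))"
    by (simp add: x sum.distrib sum_distrib_left)
  also have "\<dots> = 0"
  proof -
    have s0: "(\<Sum>k=1..n. cos (2 * pi / real n * real k * of_int c - \<phi>)) = 0"
      using sumcos[OF assms(1), of c \<phi>] Cons.prems x by auto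
    have IH: "(\<Sum>k=1..n. lin L (2 * pi / real n * real k)) = 0" using Cons by auto
    show ?thesis by (simp only: s0 IH mult_zero_right add_0)
  qed
  finally show ?case .
qed

lemma P2: "cos (t * of_int a - \<phi>) * cos (t * of_int b - \<psi>) = lin [(1/2, a - b, \<phi> - \<psi>), (1/2, a + b, \<phi> + \<psi>)] t"
proof -
  have "cos (t * of_int a - \<phi>) * cos (t * of_int b - \<psi>) = (cos ((t * of_int a - \<phi>) - (t * of_int b - \<psi>)) + cos ((t * of_int a - \<phi>) + (t * of_int b - \<psi>))) / 2"
    by (rule cos_times_cos)
  also have "(t * of_int a - \<phi>) - (t * of_int b - \<psi>) = t * of_int (a - b) - (\<phi> - \<psi>)" by (simp add: algebra_simps)
  also have "(t * of_int a - \<phi>) + (t * of_int b - \<psi>) = t * of_int (a + b) - (\<phi> + \<psi>)" by (simp add: algebra_simps)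
  finally show ?thesis by simp
qed

lemma P3: "cos (t * of_int a - \<phi>) * cos (t * of_int b - \<psi>) * cos (t * of_int c - \<chi>) =
   lin [(1/4, a - b - c, \<phi> - \<psi> - \<chi>), (1/4, a - b + c, \<phi> - \<psi> + \<chi>),
        (1/4, a + b - c, \<phi> + \<psi> - \<chi>), (1/4, a + b + c, \<phi> + \<psi> + \<chi>)] t"
proof -
  have "cos (t * of_int a - \<phi>) * cos (t * of_int b - \<psi>) * cos (t * of_int c - \<chi>)
     = (1/2) * cos (t * of_int (a - b) - (\<phi> - \<psi>)) * cos (t * of_int c - \<chi>) + (1/2) * cos (t * of_int (a + b) - (\<phi> + \<psi>)) * cos (t * of_int c - \<chi>)"
    unfolding P2 by (simp add: algebra_simps)
  also have "\<dots> = (1/2) * lin [(1/2, (a - b) - c, (\<phi> - \<psi>) - \<chi>), (1/2, (a - b) + c, (\<phi> - \<psi>) + \<chi>)] t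
      + (1/2) * lin [(1/2, (a + b) - c, (\<phi> + \<psi>) - \<chi>), (1/2, (a + b) + c, (\<phi> + \<psi>) + \<chi>)] t"
    by (simp only: mult.assoc P2)
  finally show ?thesis by (simp add: algebra_simps)
qed

lemma SQ: "cos (t * of_int a - \<phi>) ^ 2 - cos (t * of_int b - \<psi>) ^ 2 = lin [(1/2, 2 * a, 2 * \<phi>), (-1/2, 2 * b, 2 * \<psi>)] t"
proof -
  have "cos (t * of_int a - \<phi>) ^ 2 - cos (t * of_int b - \<psi>) ^ 2 =
    cos (t * of_int a - \<phi>) * cos (t * of_int a - \<phi>) - cos (t * of_int b - \<psi>) * cos (t * of_int b - \<psi>)"
    by (simp add: power2_eq_square)
  also have "\<dots> = lin [(1/2, a - a, \<phi> - \<phi>), (1/2, a + a, \<phi> + \<phi>)] t - lin [(1/2, b - b, \<psi> - \<psi>), (1/2, b + b, \<psi> + \<psi>)] t"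
    by (simp only: P2)
  finally have h: "cos (t * of_int a - \<phi>) ^ 2 - cos (t * of_int b - \<psi>) ^ 2 = lin [(1/2, a - a, \<phi> - \<phi>), (1/2, a + a, \<phi> + \<phi>)] t - lin [(1/2, b - b, \<psi> - \<psi>), (1/2, b + b, \<psi> + \<psi>)] t" .
  have e: "a + a = 2 * a" "b + b = 2 * b" "\<phi> + \<phi> = 2 * \<phi>" "\<psi> + \<psi> = 2 * \<psi>" by simp_all
  show ?thesis using h unfolding e by simp
qed

lemma cosneg: "cos (t * of_int (- a) - (- \<phi>)) = cos (t * of_int a - \<phi>)"
proof -
  have "t * of_int (- a) - (- \<phi>) = - (t * of_int a - \<phi>)" by simp
  then show ?thesis by (simp only: cos_minus)
qed

lemma aux_lin: "1/4*X+1/4*X+1/4*X+1/4*Y - 3*(1/4*Z + 1/4*X+1/4*X+1/4*W) = 3/4*X + (1/4*Y + (-3/2*X + (-3/4*W + -3/4*(Z::real))))"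
  by (simp add: algebra_simps)

lemma CUB: "cos (t * of_int a - \<phi>) ^ 3 - 3 * cos (t * of_int a - \<phi>) * cos (t * of_int b - \<psi>) ^ 2 =
  lin [(3/4, a, \<phi>), (1/4, 3 * a, 3 * \<phi>), (-3/2, a, \<phi>), (-3/4, a + 2 * b, \<phi> + 2 * \<psi>), (-3/4, a - 2 * b, \<phi> - 2 * \<psi>)] t"
proof -
  have "cos (t * of_int a - \<phi>) ^ 3 - 3 * cos (t * of_int a - \<phi>) * cos (t * of_int b - \<psi>) ^ 2 =
    cos (t * of_int a - \<phi>) * cos (t * of_int a - \<phi>) * cos (t * of_int a - \<phi>) - 3 * (cos (t * of_int a - \<phi>) * cos (t * of_int b - \<psi>) * cos (t * of_int b - \<psi>))"
    by (simp add: power2_eq_square power3_eq_cube)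
  also have "\<dots> = lin [(1/4, a - a - a, \<phi> - \<phi> - \<phi>), (1/4, a - a + a, \<phi> - \<phi> + \<phi>),
        (1/4, a + a - a, \<phi> + \<phi> - \<phi>), (1/4, a + a + a, \<phi> + \<phi> + \<phi>)] t
    - 3 * lin [(1/4, a - b - b, \<phi> - \<psi> - \<psi>), (1/4, a - b + b, \<phi> - \<psi> + \<psi>),
        (1/4, a + b - b, \<phi> + \<psi> - \<psi>), (1/4, a + b + b, \<phi> + \<psi> + \<psi>)] t"
    by (simp only: P3)
  finally have h: "cos (t * of_int a - \<phi>) ^ 3 - 3 * cos (t * of_int a - \<phi>) * cos (t * of_int b - \<psi>) ^ 2 = 
     lin [(1/4, a - a - a, \<phi> - \<phi> - \<phi>), (1/4, a - a + a, \<phi> - \<phi> + \<phi>),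
        (1/4, a + a - a, \<phi> + \<phi> - \<phi>), (1/4, a + a + a, \<phi> + \<phi> + \<phi>)] t
    - 3 * lin [(1/4, a - b - b, \<phi> - \<psi> - \<psi>), (1/4, a - b + b, \<phi> - \<psi> + \<psi>),
        (1/4, a + b - b, \<phi> + \<psi> - \<psi>), (1/4, a + b + b, \<phi> + \<psi> + \<psi>)] t" .
  have e: "a - a - a = - a" "\<phi> - \<phi> - \<phi> = - \<phi>" "a - a + a = a" "\<phi> - \<phi> + \<phi> = \<phi>"
    "a + a - a = a" "\<phi> + \<phi> - \<phi> = \<phi>" "a + a + a = 3 * a" "\<phi> + \<phi> + \<phi> = 3 * \<phi>"
    "a - b - b = a - 2 * b" "\<phi> - \<psi> - \<psi> = \<phi> - 2 * \<psi>" "a - b + b = a" "\<phi> - \<psi> + \<psi> = \<phi>"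
    "a + b - b = a" "\<phi> + \<psi> - \<psi> = \<phi>" "a + b + b = a + 2 * b" "\<phi> + \<psi> + \<psi> = \<phi> + 2 * \<psi>"
    by simp_all
  have h2: "cos (t * of_int a - \<phi>) ^ 3 - 3 * cos (t * of_int a - \<phi>) * cos (t * of_int b - \<psi>) ^ 2 = 
     (1/4 * cos (t * of_int a - \<phi>) + 1/4 * cos (t * of_int a - \<phi>) + 1/4 * cos (t * of_int a - \<phi>) + 1/4 * cos (t * of_int (3 * a) - 3 * \<phi>))
    - 3 * (1/4 * cos (t * of_int (a - 2 * b) - (\<phi> - 2 * \<psi>)) + 1/4 * cos (t * of_int a - \<phi>) + 1/4 * cos (t * of_int a - \<phi>)
       + 1/4 * cos (t * of_int (a + 2 * b) - (\<phi> + 2 * \<psi>)))"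
    using h unfolding e by (simp only: lin_simps cosneg add_0_right add.assoc)
  show ?thesis unfolding h2 lin_simps add_0_right by (rule aux_lin)
qed

lemma sid3:
  assumes "sidon_type S 3 n" "a \<in> S" "b \<in> S" "c \<in> S"
    "e1 \<in> {-1, 0, 1}" "e2 \<in> {-1, 0, 1}" "e3 \<in> {-1, 0, 1}" "e1 \<noteq> 0 \<or> e2 \<noteq> 0 \<or> e3 \<noteq> 0"
    "e1 * e2 = -1 \<Longrightarrow> a \<noteq> b" "e1 * e3 = -1 \<Longrightarrow> a \<noteq> c" "e2 * e3 = -1 \<Longrightarrow> b \<noteq> c"
  shows "\<not> int n dvd (e1 * a + e2 * b + e3 * c)"
proof -
  define \<epsilon> :: "nat \<Rightarrow> int" where "\<epsilon> i = (if i = 0 then e1 else if i = 1 then e2 else e3)" for i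
  define x :: "nat \<Rightarrow> int" where "x i = (if i = 0 then a else if i = 1 then b else c)" for i
  have l3: "(i::nat) < 3 \<longleftrightarrow> i = 0 \<or> i = 1 \<or> i = 2" for i by auto
  have s3: "(\<Sum>i<3. \<epsilon> i * x i) = e1 * a + e2 * b + e3 * c"
    by (simp add: eval_nat_numeral \<epsilon>_def x_def)
  have h1: "\<forall>i<3. \<epsilon> i \<in> {-1, 0, 1} \<and> x i \<in> S" unfolding l3 using assms by (auto simp: \<epsilon>_def x_def)
  have h2: "\<exists>i<3. \<epsilon> i \<noteq> 0" unfolding l3 using assms(8) by (auto simp: \<epsilon>_def)
  have h3: "\<not> (\<exists>i<3. \<exists>j<3. \<epsilon> i = 1 \<and> \<epsilon> j = -1 \<and> x i = x j)"
    unfolding l3 using assms(9-11) by (auto simp: \<epsilon>_def x_def)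
  have "\<not> [(\<Sum>i<3. \<epsilon> i * x i) = 0] (mod int n)"
    using assms(1) h1 h2 h3 unfolding sidon_type_def by blast
  then show ?thesis unfolding s3 cong_0_iff .
qed

lemma sid2:
  assumes "sidon_type S 2 n" "a \<in> S" "b \<in> S"
    "e1 \<in> {-1, 0, 1}" "e2 \<in> {-1, 0, 1}" "e1 \<noteq> 0 \<or> e2 \<noteq> 0"
    "e1 * e2 = -1 \<Longrightarrow> a \<noteq> b"
  shows "\<not> int n dvd (e1 * a + e2 * b)"
proof -
  define \<epsilon> :: "nat \<Rightarrow> int" where "\<epsilon> i = (if i = 0 then e1 else e2)" for i
  define x :: "nat \<Rightarrow> int" where "x i = (if i = 0 then a else b)" for i
  have l3: "(i::nat) < 2 \<longleftrightarrow> i = 0 \<or> i = 1" for i by auto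
  have s3: "(\<Sum>i<2. \<epsilon> i * x i) = e1 * a + e2 * b"
    by (simp add: eval_nat_numeral \<epsilon>_def x_def)
  have h1: "\<forall>i<2. \<epsilon> i \<in> {-1, 0, 1} \<and> x i \<in> S" unfolding l3 using assms by (auto simp: \<epsilon>_def x_def)
  have h2: "\<exists>i<2. \<epsilon> i \<noteq> 0" unfolding l3 using assms(6) by (auto simp: \<epsilon>_def)
  have h3: "\<not> (\<exists>i<2. \<exists>j<2. \<epsilon> i = 1 \<and> \<epsilon> j = -1 \<and> x i = x j)"
    unfolding l3 using assms(7) by (auto simp: \<epsilon>_def x_def)
  have "\<not> [(\<Sum>i<2. \<epsilon> i * x i) = 0] (mod int n)"
    using assms(1) h1 h2 h3 unfolding sidon_type_def by blast
  then show ?thesis unfolding s3 cong_0_iff .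
qed

lemma sid1:
  assumes "sidon_type S 1 n" "a \<in> S"
  shows "\<not> int n dvd a"
proof -
  define \<epsilon> :: "nat \<Rightarrow> int" where "\<epsilon> i = 1" for i
  define x :: "nat \<Rightarrow> int" where "x i = a" for i
  have s3: "(\<Sum>i<1. \<epsilon> i * x i) = a"
    by (simp add: \<epsilon>_def x_def)
  have h1: "\<forall>i<1. \<epsilon> i \<in> {-1, 0, 1} \<and> x i \<in> S" using assms by (auto simp: \<epsilon>_def x_def)
  have h2: "\<exists>i<1. \<epsilon> i \<noteq> 0" by (auto simp: \<epsilon>_def)
  have h3: "\<not> (\<exists>i<1. \<exists>j<1. \<epsilon> i = 1 \<and> \<epsilon> j = -1 \<and> x i = x j)"
    by (auto simp: \<epsilon>_def x_def)
  have "\<not> [(\<Sum>i<1. \<epsilon> i * x i) = 0] (mod int n)"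
    using assms(1) h1 h2 h3 unfolding sidon_type_def by blast
  then show ?thesis unfolding s3 cong_0_iff .
qed

definition ph :: "nat \<Rightarrow> real" where "ph r = (if even r then pi / 2 else 0)"

lemma col: "r < 2 * e \<Longrightarrow> Amat e n m r k = cos (2 * pi / real n * real k * real_of_int (m (r div 2)) - ph r)"
  by (simp add: Amat_def ph_def cos_diff)

theorem lemma5p1:
  fixes n e s :: nat and m :: "nat \<Rightarrow> int" and f :: "(nat \<Rightarrow> real) \<Rightarrow> real"
  assumes "n > 0" and "e > 0" and "s \<in> {1, 2, 3}"
    and "inj_on m {..<e}"
    and "sidon_type (m ` {..<e}) s n"
    and "f \<in> Phi s (2 * e - 1)"
  shows "eval_cols f (Amat e n m) n = 0"
proof -
  define S where "S = m ` {..<e}"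
  define T where "T k = 2 * pi / real n * real k" for k :: nat
  have sid: "sidon_type S s n" using assms(5) by (simp add: S_def)
  have D: "i \<le> 2 * e - 1 \<longleftrightarrow> i < 2 * e" for i using assms(2) by auto
  have colT: "r < 2 * e \<Longrightarrow> Amat e n m r k = cos (T k * of_int (m (r div 2)) - ph r)" for r k
    unfolding T_def by (rule col)
  have mem: "r < 2 * e \<Longrightarrow> m (r div 2) \<in> S" for r unfolding S_def by auto
  have injd: "r < 2 * e \<Longrightarrow> r' < 2 * e \<Longrightarrow> r div 2 \<noteq> r' div 2 \<Longrightarrow> m (r div 2) \<noteq> m (r' div 2)" for r r'
    using assms(4) unfolding inj_on_def by auto
  have fin: "eval_cols f (Amat e n m) n = 0"
    if L1: "\<forall>(w, c, \<phi>)\<in>set L. \<not> int n dvd c \<or> cos \<phi> = 0"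
    and L2: "\<And>k. f (\<lambda>r. Amat e n m r k) = lin L (T k)" for L
  proof -
    have "eval_cols f (Amat e n m) n = (\<Sum>k=1..n. lin L (2 * pi / real n * real k))"
      unfolding eval_cols_def L2 T_def ..
    also have "\<dots> = 0" by (rule comb[OF assms(1) L1])
    finally show ?thesis .
  qed
  consider "s = 1" | "s = 2" | "s = 3" using assms(3) by auto
  then show ?thesis
  proof cases
    case 1
    then obtain i where f: "f = (\<lambda>x. x i)" and i: "i < 2 * e"
      using assms(6) D by (auto simp: Phi_def Phi1_def)
    have s1: "sidon_type S 1 n" using sid 1 by simp
    show ?thesis
    proof (rule fin[of "[(1, m (i div 2), ph i)]"])
      show "\<forall>(w, c, \<phi>)\<in>set [(1, m (i div 2), ph i)]. \<not> int n dvd c \<or> cos \<phi> = 0"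
        using sid1[OF s1 mem[OF i]] by simp
      show "f (\<lambda>r. Amat e n m r k) = lin [(1, m (i div 2), ph i)] (T k)" for k
        using colT[OF i] by (simp add: f)
    qed
  next
    case 2
    have s2: "sidon_type S 2 n" using sid 2 by simp
    from assms(6) 2 D consider
      (prod) i j where "f = (\<lambda>x. x i * x j)" "i < j" "j < 2 * e"
    | (sq) i where "f = (\<lambda>x. x i ^ 2 - x (i + 1) ^ 2)" "i + 1 < 2 * e"
      by (auto simp: Phi_def Phi2_def)
    then show ?thesis
    proof cases
      case prod
      have i: "i < 2 * e" using prod by simp
      note j = prod(3)
      define a where "a = m (i div 2)"
      define b where "b = m (j div 2)"
      let ?L = "[(1/2, a - b, ph i - ph j), (1/2, a + b, ph i + ph j)]"
      show ?thesis
      proof (rule fin[of ?L])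
        have c1: "\<not> int n dvd (a - b) \<or> cos (ph i - ph j) = 0"
        proof (cases "i div 2 = j div 2")
          case True
          then have "even i" "odd j" using prod(2) by presburger+
          then show ?thesis by (simp add: ph_def)
        next
          case False
          then have "a \<noteq> b" using injd[OF i j] by (simp add: a_def b_def)
          then show ?thesis using sid2[OF s2 mem[OF i] mem[OF j], of 1 "-1"] by (simp add: a_def b_def)
        qed
        have c2: "\<not> int n dvd (a + b)"
          using sid2[OF s2 mem[OF i] mem[OF j], of 1 1] by (simp add: a_def b_def)
        show "\<forall>(w, c, \<phi>)\<in>set ?L. \<not> int n dvd c \<or> cos \<phi> = 0" using c1 c2 by simp
        show "f (\<lambda>r. Amat e n m r k) = lin ?L (T k)" for k
          using colT[OF i, of k] colT[OF j, of k] P2[of "T k" a "ph i" b "ph j"] by (simp add: prod(1) a_def b_def)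
      qed
    next
      case sq
      have i: "i < 2 * e" using sq by simp
      note j = sq(2)
      define a where "a = m (i div 2)"
      define b where "b = m ((i + 1) div 2)"
      let ?L = "[(1/2, 2 * a, 2 * ph i), (-1/2, 2 * b, 2 * ph (i + 1))]"
      show ?thesis
      proof (rule fin[of ?L])
        have c1: "\<not> int n dvd (2 * a)"
          using sid2[OF s2 mem[OF i] mem[OF i], of 1 1] by (simp add: a_def)
        have c2: "\<not> int n dvd (2 * b)"
          using sid2[OF s2 mem[OF j] mem[OF j], of 1 1] by (simp add: b_def)
        show "\<forall>(w, c, \<phi>)\<in>set ?L. \<not> int n dvd c \<or> cos \<phi> = 0" using c1 c2 by simp
        show "f (\<lambda>r. Amat e n m r k) = lin ?L (T k)" for k
          using colT[OF i, of k] colT[OF j, of k] SQ[of "T k" a "ph i" b "ph (i + 1)"] by (simp add: sq(1) a_def b_def)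
      qed
    qed
  next
    case 3
    have s3: "sidon_type S 3 n" using sid 3 by simp
    from assms(6) 3 D consider
      (tri) i j k where "f = (\<lambda>x. x i * x j * x k)" "i < j" "j < k" "k < 2 * e"
    | (cub) i j where "f = (\<lambda>x. x i ^ 3 - 3 * x i * x j ^ 2)" "i < 2 * e" "j < 2 * e" "i \<noteq> j"
      by (auto simp: Phi_def Phi3_def)
    then show ?thesis
    proof cases
      case tri
      have i: "i < 2 * e" and j: "j < 2 * e" using tri by simp_all
      note k = tri(4)
      define a where "a = m (i div 2)"
      define b where "b = m (j div 2)"
      define c where "c = m (k div 2)"
      have ma: "a \<in> S" and mb: "b \<in> S" and mc: "c \<in> S"
        using mem[OF i] mem[OF j] mem[OF k] by (simp_all add: a_def b_def c_def)
      let ?L = "[(1/4, a - b - c, ph i - ph j - ph k), (1/4, a - b + c, ph i - ph j + ph k),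
        (1/4, a + b - c, ph i + ph j - ph k), (1/4, a + b + c, ph i + ph j + ph k)]"
      have cs: "\<not> int n dvd (a - b - c) \<and> \<not> int n dvd (a - b + c) \<and> \<not> int n dvd (a + b - c) \<and> \<not> int n dvd (a + b + c)"
      proof -
        have ik: "i div 2 \<noteq> k div 2" using tri(2,3) by presburger
        consider "i div 2 = j div 2" | "j div 2 = k div 2" | "i div 2 \<noteq> j div 2" "j div 2 \<noteq> k div 2" by blast
        then show ?thesis
        proof cases
          case 1
          then have ab: "a = b" by (simp add: a_def b_def)
          have ac: "a \<noteq> c" using injd[OF i k ik] by (simp add: a_def c_def)
          show ?thesis
            using sid3[OF s3 mc mc mc, of 0 0 1] sid3[OF s3 ma ma mc, of 1 1 "-1"] sid3[OF s3 ma ma mc, of 1 1 1] ab ac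
            by auto
        next
          case 2
          then have bc: "b = c" by (simp add: b_def c_def)
          have ab: "a \<noteq> b" using injd[OF i j] 2 ik by (simp add: a_def b_def)
          show ?thesis
            using sid3[OF s3 ma ma ma, of 1 0 0] sid3[OF s3 ma mb mb, of 1 "-1" "-1"] sid3[OF s3 ma mb mb, of 1 1 1] ab bc
            by auto
        next
          case 3
          have ab: "a \<noteq> b" using injd[OF i j] 3 by (simp add: a_def b_def)
          have bc: "b \<noteq> c" using injd[OF j k] 3 by (simp add: b_def c_def)
          have ac: "a \<noteq> c" using injd[OF i k ik] by (simp add: a_def c_def)
          show ?thesis
            using sid3[OF s3 ma mb mc, of 1 "-1" "-1"] sid3[OF s3 ma mb mc, of 1 "-1" 1]
              sid3[OF s3 ma mb mc, of 1 1 "-1"] sid3[OF s3 ma mb mc, of 1 1 1] ab bc ac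
            by auto
        qed
      qed
      show ?thesis
      proof (rule fin[of ?L])
        show "\<forall>(w, c, \<phi>)\<in>set ?L. \<not> int n dvd c \<or> cos \<phi> = 0" using cs by simp
        show "f (\<lambda>r. Amat e n m r t) = lin ?L (T t)" for t
          using colT[OF i, of t] colT[OF j, of t] colT[OF k, of t] P3[of "T t" a "ph i" b "ph j" c "ph k"]
          by (simp add: tri(1) a_def b_def c_def)
      qed
    next
      case cub
      note i = cub(2) and j = cub(3)
      define a where "a = m (i div 2)"
      define b where "b = m (j div 2)"
      have ma: "a \<in> S" and mb: "b \<in> S"
        using mem[OF i] mem[OF j] by (simp_all add: a_def b_def)
      let ?L = "[(3/4, a, ph i), (1/4, 3 * a, 3 * ph i), (-3/2, a, ph i), (-3/4, a + 2 * b, ph i + 2 * ph j), (-3/4, a - 2 * b, ph i - 2 * ph j)]"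
      have c1: "\<not> int n dvd a" using sid3[OF s3 ma ma ma, of 1 0 0] by simp
      have c2: "\<not> int n dvd (3 * a)" using sid3[OF s3 ma ma ma, of 1 1 1] by simp
      have c3: "\<not> int n dvd (a + 2 * b) \<and> \<not> int n dvd (a - 2 * b)"
      proof (cases "i div 2 = j div 2")
        case True
        then have "a = b" by (simp add: a_def b_def)
        then show ?thesis using c1 c2 by simp
      next
        case False
        then have ab: "a \<noteq> b" using injd[OF i j] by (simp add: a_def b_def)
        show ?thesis using sid3[OF s3 ma mb mb, of 1 1 1] sid3[OF s3 ma mb mb, of 1 "-1" "-1"] ab by (auto simp: algebra_simps)
      qed
      show ?thesis
      proof (rule fin[of ?L])
        show "\<forall>(w, c, \<phi>)\<in>set ?L. \<not> int n dvd c \<or> cos \<phi> = 0" using c1 c2 c3 by simp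
        show "f (\<lambda>r. Amat e n m r t) = lin ?L (T t)" for t
          using colT[OF i, of t] colT[OF j, of t] CUB[of "T t" a "ph i" b "ph j"]
          by (simp add: cub(1) a_def b_def)
      qed
    qed
  qed
qed

end
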